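(* Let $M\ge 2$ and let $\mathfrak{e}=\{\mathbf{e}_1,\dots,\mathbf{e}_M\}$ be an arbitrary (not necessarily orthonormal) basis of the Euclidean space $\mathbb{R}^M$, with metric tensor $g_{ij}=(\mathbf{e}_i\cdot\mathbf{e}_j)$. Let $\boldsymbol{n}=\sum_{j=1}^M \mathbf{e}_j n^j$ be a unit vector, let $\Upsilon=\{\mathbf{r}:\mathbf{r}\cdot\boldsymbol{n}=0\}$ be the hyperplane orthogonal to it, bounding the half-space $\mathbb{R}^{M+}=\{\mathbf{r}:\mathbf{r}\cdot\boldsymbol{n}>0\}$. Let $D^{ij}$ be the components in the basis $\mathfrak{e}$ of a symmetric positive definite contravariant $2$-tensor (the diffusion tensor), i.e. $\mathbf{D}=\sum_{i,j}D^{ij}\mathbf{e}_i\otimes\mathbf{e}_j$, and set $D^i_j=\sum_{k}D^{ik}g_{kj}$ and $D_{ij}=\sum_{k,p}g_{ik}g_{jp}D^{kp}$. Define $$\omega=\Big[\sum_{i,j,p,k=1}^M g_{ij}D^i_pD^j_k n^p n^k\Big]^{1/2}.$$ Then there exists a basis $\mathfrak{b}=\mathfrak{b}_\Upsilon\cup\{\boldsymbol{b}_M\}$ of $\mathbb{R}^M$ with the following properties. (1) $\mathfrak{b}_\Upsilon=\{\mathbf{b}_1,\dots,\mathbf{b}_{M-1}\}$ is an orthonormal basis of $\Upsilon$, and $\boldsymbol{b}_M$ is the unit vector, not lying in $\Upsilon$, given by $$\boldsymbol{b}_M=\frac1\omega\sum_{i,j=1}^M \mathbf{e}_i D^i_j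 n^j .$$ (2) In the basis $\mathfrak{b}$ the diffusion tensor is diagonal: writing $\mathbf{D}=\sum_{i,j}\tilde D^{ij}\mathbf{b}_i\otimes\mathbf{b}_j$ (with $\mathbf{b}_M:=\boldsymbol{b}_M$), one has $\tilde D^{ij}=\mathcal{D}_i\delta_{ij}$ with all $\mathcal{D}_i>0$, and $$\mathcal{D}_M=\omega^2\Big[\sum_{i,j=1}^M D_{ij}n^in^j\Big]^{-1}.$$ (3) Suppose in addition that the initial basis has the form $\mathfrak{e}=\mathfrak{e}_\Upsilon\cup\{\boldsymbol{n}\}$, i.e. $\mathbf{e}_M=\boldsymbol{n}$ and $\mathfrak{e}_\Upsilon=\{\mathbf{e}_1,\dots,\mathbf{e}_{M-1}\}$ is a basis of $\Upsilon$. Let $u^\alpha_{\ \beta}$ ($\alpha,\beta=1,\dots,M-1$) be the invertible matrix defined by $\mathbf{e}_\alpha=\sum_{\beta=1}^{M-1}\mathbf{b}_\beta u^\beta_{\ \alpha}$, and let $\breve u^\alpha_{\ \beta}$ be its inverse, $\sum_{\gamma}\breve u^\alpha_{\ \gamma}u^\gamma_{\ \beta}=\delta^\alpha_\beta$. Then $D^{MM}>0$, and for every $\mathbf{r}\in\mathbb{R}^M$ written as $$\mathbf{r}=\sum_{\gamma=1}^{M-1}\mathbf{e}_\gamma x^\gamma+\boldsymbol{n}x^M=\sum_{\gamma=1}^{M-1}\mathbf{b}_\gamma\zeta^\gamma+\boldsymbol{b}_M\zeta^M$$ the coordinates satisfy $$\zeta^\alpha=\sum_{\gamma=1}^{M-1}u^\alpha_{\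 \gamma}\Big(x^\gamma-\frac{D^{\gamma M}}{D^{MM}}x^M\Big),\qquad \zeta^M=\frac{\omega}{D^{MM}}x^M,$$ $$x^\alpha=\sum_{\gamma=1}^{M-1}\breve u^\alpha_{\ \gamma}\zeta^\gamma+\frac{D^{\alpha M}}{\omega}\zeta^M,\qquad x^M=\frac{D^{MM}}{\omega}\zeta^M,$$ and moreover, for all $\alpha,\beta=1,\dots,M-1$, $$\sum_{\gamma=1}^{M-1}\breve u^\alpha_{\ \gamma}\breve u^\beta_{\ \gamma}\mathcal{D}_\gamma=D^{\alpha\beta}-\frac{D^{\alpha M}D^{\beta M}}{D^{MM}}.$$
   Context: Components of vectors are upper-indexed: a vector $\mathbf{r}$ has components $x^i$ in the basis $\mathfrak{e}$ if $\mathbf{r}=\sum_i\mathbf{e}_ix^i$. Tensor components in a new basis are obtained by the standard contravariant transformation rule, so that $\mathbf{D}=\sum D^{ij}\mathbf{e}_i\otimes\mathbf{e}_j=\sum\tilde D^{ij}\mathbf{b}_i\otimes\mathbf{b}_j$ describe the same tensor. Greek indices run over $1,\dots,M-1$ (directions in the hyperplane $\Upsilon$), Latin indices over $1,\dots,M$. *)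

theory Defs
  imports "HOL-Analysis.Analysis"
begin

text \<open>Vectors of the Euclidean space R^M are elements of real^'n with M = CARD('n).
  Bases and index families are functions on nat, used on the index set {1..M}.\<close>

definition is_basis :: "nat \<Rightarrow> (nat \<Rightarrow> real^'n) \<Rightarrow> bool" where
  "is_basis M e \<longleftrightarrow> inj_on e {1..M} \<and> independent (e ` {1..M}) \<and> span (e ` {1..M}) = UNIV"

text \<open>Tensor product of two vectors, as a matrix of components in the standard basis.\<close>
definition tprod :: "real^'n \<Rightarrow> real^'n \<Rightarrow> real^'n^'n" where
  "tprod x y = (\<chi> a c. x $ a * y $ c)"

definition gmet :: "(nat \<Rightarrow> real^'n) \<Rightarrow> nat \<Rightarrow> nat \<Rightarrow> real" where
  "gmet e i j = e i \<bullet> e j"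

definition Dmix :: "nat \<Rightarrow> (nat \<Rightarrow> real^'n) \<Rightarrow> (nat \<Rightarrow> nat \<Rightarrow> real) \<Rightarrow> nat \<Rightarrow> nat \<Rightarrow> real" where
  "Dmix M e D i j = (\<Sum>k\<in>{1..M}. D i k * gmet e k j)"

definition Dlow :: "nat \<Rightarrow> (nat \<Rightarrow> real^'n) \<Rightarrow> (nat \<Rightarrow> nat \<Rightarrow> real) \<Rightarrow> nat \<Rightarrow> nat \<Rightarrow> real" where
  "Dlow M e D i j = (\<Sum>k\<in>{1..M}. \<Sum>p\<in>{1..M}. gmet e i k * gmet e j p * D k p)"

definition omega :: "nat \<Rightarrow> (nat \<Rightarrow> real^'n) \<Rightarrow> (nat \<Rightarrow> nat \<Rightarrow> real) \<Rightarrow> (nat \<Rightarrow> real) \<Rightarrow> real" where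
  "omega M e D nc = sqrt (\<Sum>i\<in>{1..M}. \<Sum>j\<in>{1..M}. \<Sum>p\<in>{1..M}. \<Sum>k\<in>{1..M}.
      gmet e i j * Dmix M e D i p * Dmix M e D j k * nc p * nc k)"

end

theory Submission
  imports Defs
begin



lemma mv_scale: "(A::real^'n^'m) *v (k *\<^sub>R v) = k *\<^sub>R (A *v v)"
  by (simp add: vec_eq_iff matrix_vector_mult_def sum_distrib_left mult.left_commute)

lemma quad_zero:
  fixes c K :: real
  assumes "\<And>t. 2 * t * c \<le> t^2 * K"
  shows "c = 0"
proof -
  define t where "t = c / (\<bar>K\<bar> + 1)"
  have pos: "\<bar>K\<bar> + 1 > 0" by simp
  have "2 * t * c \<le> t^2 * K" by (rule assms)
  then have "(2 * t * c) * (\<bar>K\<bar> + 1)^2 \<le> (t^2 * K) * (\<bar>K\<bar> + 1)^2"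
    by (simp add: mult_right_mono)
  also have "(t^2 * K) * (\<bar>K\<bar> + 1)^2 = (t * (\<bar>K\<bar> + 1))^2 * K"
    by (simp add: power_mult_distrib)
  also have "t * (\<bar>K\<bar> + 1) = c" using pos by (simp add: t_def)
  also have "(2 * t * c) * (\<bar>K\<bar> + 1)^2 = 2 * (t * (\<bar>K\<bar> + 1)) * c * (\<bar>K\<bar> + 1)"
    by (simp add: power2_eq_square)
  also have "t * (\<bar>K\<bar> + 1) = c" using pos by (simp add: t_def)
  finally have "2 * c * c * (\<bar>K\<bar> + 1) \<le> c^2 * K" .
  then have "2 * c^2 * (\<bar>K\<bar> + 1) \<le> c^2 * K" by (simp add: power2_eq_square)
  moreover have "c^2 * K \<le> c^2 * \<bar>K\<bar>" by (simp add: mult_left_mono)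
  ultimately have "c^2 * (\<bar>K\<bar> + 2) \<le> 0" by (simp add: algebra_simps)
  moreover have "c^2 \<ge> 0" by simp
  have "c^2 \<le> 0"
  proof (rule ccontr)
    assume "\<not> c^2 \<le> 0"
    then have "c^2 > 0" by simp
    moreover have "\<bar>K\<bar> + 2 > 0" by simp
    ultimately have "c^2 * (\<bar>K\<bar> + 2) > 0" by (rule mult_pos_pos)
    with \<open>c^2 * (\<bar>K\<bar> + 2) \<le> 0\<close> show False by simp
  qed
  then show ?thesis by simp
qed

lemma spectral_sub:
  fixes Q :: "real^'n^'n"
  assumes sym: "\<And>x y. x \<bullet> (Q *v y) = y \<bullet> (Q *v x)"
  shows "subspace S \<Longrightarrow> \<exists>B. B \<subseteq> S \<and> pairwise orthogonal B \<and> (\<forall>x\<in>B. norm x = 1) \<and> independent B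
     \<and> finite B \<and> span B = S \<and> (\<forall>x\<in>B. \<forall>y\<in>B. x \<noteq> y \<longrightarrow> x \<bullet> (Q *v y) = 0)"
proof (induction "dim S" arbitrary: S rule: less_induct)
  case less
  show ?case
  proof (cases "S = {0}")
    case True
    then show ?thesis by (intro exI[of _ "{}"]) (auto simp: independent_empty)
  next
    case False
    with less.prems obtain s where s: "s \<in> S" "s \<noteq> 0"
      using subspace_0 by blast
    define f where "f = (\<lambda>x. x \<bullet> (Q *v x))"
    let ?K = "sphere 0 1 \<inter> S"
    have cK: "compact ?K"
      by (intro compact_Int_closed compact_sphere closed_subspace less.prems)
    have "s /\<^sub>R norm s \<in> ?K" using s less.prems by (auto simp: subspace_scale)
    then have neK: "?K \<noteq> {}" by blast
    have contf: "continuous_on ?K f" unfolding f_def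
      by (intro continuous_intros linear_continuous_on matrix_vector_mul_bounded_linear)
    obtain x0 where x0: "x0 \<in> ?K" "\<And>y. y \<in> ?K \<Longrightarrow> f y \<le> f x0"
      using continuous_attains_sup[OF cK neK contf] by blast
    define lam where "lam = f x0"
    have fhom: "f (c *\<^sub>R z) = c^2 * f z" for c z
      by (simp add: f_def mv_scale power2_eq_square)
    have bound: "f z \<le> lam * (z \<bullet> z)" if "z \<in> S" for z
    proof (cases "z = 0")
      case True then show ?thesis by (simp add: f_def)
    next
      case False
      have "z /\<^sub>R norm z \<in> ?K" using that False less.prems by (auto simp: subspace_scale)
      then have "f (z /\<^sub>R norm z) \<le> lam" using x0 lam_def by blast
      then have "(1 / norm z)^2 * f z \<le> lam" using fhom[of "1 / norm z" z] by (simp add: divide_inverse)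
      then have "f z \<le> lam * (norm z)^2" using False by (simp add: field_simps)
      then show ?thesis by (simp add: power2_norm_eq_inner)
    qed
    define S' where "S' = S \<inter> {y. x0 \<bullet> y = 0}"
    have subS': "subspace S'" unfolding S'_def
      using less.prems unfolding subspace_def by (auto simp: inner_add_right)
    have x0S: "x0 \<in> S" and x0n: "norm x0 = 1" using x0 by auto
    have x0x0: "x0 \<bullet> x0 = 1" using x0n by (simp add: norm_eq_1)
    have "span S' = S'" "span S = S" using subS' less.prems by (auto simp: span_eq_iff)
    moreover have "S' \<subset> S"
    proof -
      have "x0 \<notin> S'" using x0x0 unfolding S'_def by auto
      then show ?thesis using x0S unfolding S'_def by blast
    qed
    ultimately have "span S' \<subset> span S" by (simp only:)
    then have dlt: "dim S' < dim S" by (rule dim_psubset)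
    obtain B' where B': "B' \<subseteq> S'" "pairwise orthogonal B'" "\<forall>x\<in>B'. norm x = 1" "independent B'"
      "finite B'" "span B' = S'" "\<forall>x\<in>B'. \<forall>y\<in>B'. x \<noteq> y \<longrightarrow> x \<bullet> (Q *v y) = 0"
      using less.hyps[OF dlt subS'] by blast
    have orth: "y \<bullet> (Q *v x0) = 0" if "y \<in> S'" for y
    proof -
      have yS: "y \<in> S" and yx: "x0 \<bullet> y = 0" using that by (auto simp: S'_def)
      define c where "c = y \<bullet> (Q *v x0)"
      define K where "K = lam * (y \<bullet> y) - f y"
      have "2 * t * c \<le> t^2 * K" for t
      proof -
        have "x0 + t *\<^sub>R y \<in> S" using yS x0S less.prems by (simp add: subspace_add subspace_scale)
        then have h1: "f (x0 + t *\<^sub>R y) \<le> lam * ((x0 + t *\<^sub>R y) \<bullet> (x0 + t *\<^sub>R y))" by (rule bound)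
        have h2: "f (x0 + t *\<^sub>R y) = lam + 2 * t * c + t^2 * f y"
          using sym[of x0 y]
          by (simp add: f_def lam_def c_def matrix_vector_right_distrib mv_scale
              inner_add_left inner_add_right power2_eq_square algebra_simps)
        have h3: "(x0 + t *\<^sub>R y) \<bullet> (x0 + t *\<^sub>R y) = 1 + t^2 * (y \<bullet> y)"
          using x0x0 yx by (simp add: inner_add_left inner_add_right inner_commute power2_eq_square)
        have "lam + 2 * t * c + t^2 * f y \<le> lam * (1 + t^2 * (y \<bullet> y))"
          using h1 unfolding h2 h3 .
        then show ?thesis by (simp add: K_def algebra_simps)
      qed
      then show ?thesis using quad_zero c_def by blast
    qed
    show ?thesis
    proof (intro exI[of _ "insert x0 B'"] conjI)
      show "insert x0 B' \<subseteq> S" using B'(1) x0S S'_def by auto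
      show "pairwise orthogonal (insert x0 B')"
        using B'(1,2) by (auto simp: pairwise_insert S'_def orthogonal_def inner_commute)
      then show "independent (insert x0 B')"
        using B'(3) x0n by (metis insertE norm_zero pairwise_orthogonal_independent zero_neq_one)
      show "\<forall>x\<in>insert x0 B'. norm x = 1" using B'(3) x0n by auto
      show "finite (insert x0 B')" using B'(5) by simp
      show "span (insert x0 B') = S"
      proof
        show "span (insert x0 B') \<subseteq> S"
          using B'(1) x0S less.prems S'_def by (intro span_minimal) auto
        show "S \<subseteq> span (insert x0 B')"
        proof
          fix z assume z: "z \<in> S"
          have "z - (x0 \<bullet> z) *\<^sub>R x0 \<in> S'"
            using z x0S less.prems x0x0 by (auto simp: S'_def subspace_diff subspace_scale inner_diff_right)
          then have "z - (x0 \<bullet> z) *\<^sub>R x0 \<in> span (insert x0 B')"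
            using B'(6) span_mono[of B' "insert x0 B'"] by auto
          moreover have "(x0 \<bullet> z) *\<^sub>R x0 \<in> span (insert x0 B')"
            by (simp add: span_base span_scale)
          ultimately have "z - (x0 \<bullet> z) *\<^sub>R x0 + (x0 \<bullet> z) *\<^sub>R x0 \<in> span (insert x0 B')"
            by (rule span_add)
          then show "z \<in> span (insert x0 B')" by simp
        qed
      qed
      show "\<forall>x\<in>insert x0 B'. \<forall>y\<in>insert x0 B'. x \<noteq> y \<longrightarrow> x \<bullet> (Q *v y) = 0"
        using B'(1,7) orth sym by auto
    qed
  qed
qed


lemma tprod_mult: "tprod x y *v v = (y \<bullet> v) *\<^sub>R x"
  by (simp add: vec_eq_iff matrix_vector_mult_def tprod_def inner_vec_def sum_distrib_left sum_distrib_right mult.assoc mult.left_commute mult.commute)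

lemma scaleR_mat_mult: "(c *\<^sub>R (A::real^'n^'m)) *v v = c *\<^sub>R (A *v v)"
  by (simp add: vec_eq_iff matrix_vector_mult_def sum_distrib_left mult.assoc)

lemma sum_mat_mult: "finite I \<Longrightarrow> (\<Sum>i\<in>I. A i) *v v = (\<Sum>i\<in>I. A i *v v)"
  by (induction I rule: finite_induct) (auto simp: matrix_vector_mult_add_rdistrib)

lemma Tm_mult:
  assumes "finite I"
  shows "(\<Sum>i\<in>I. \<Sum>j\<in>I. D i j *\<^sub>R tprod (e i) (e j)) *v v
       = (\<Sum>i\<in>I. \<Sum>j\<in>I. (D i j * (e j \<bullet> v)) *\<^sub>R e i)"
  using assms by (simp add: sum_mat_mult scaleR_mat_mult tprod_mult scaleR_right.sum)

lemma Tm_quad: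
  assumes "finite I"
  shows "w \<bullet> ((\<Sum>i\<in>I. \<Sum>j\<in>I. D i j *\<^sub>R tprod (e i) (e j)) *v v)
       = (\<Sum>i\<in>I. \<Sum>j\<in>I. (e i \<bullet> w) * D i j * (e j \<bullet> v))"
  using assms by (simp add: Tm_mult inner_sum_right inner_commute mult.commute mult.left_commute)

lemma Tm_sym:
  assumes "finite I" "\<forall>i\<in>I. \<forall>j\<in>I. D i j = D j i"
  shows "w \<bullet> ((\<Sum>i\<in>I. \<Sum>j\<in>I. D i j *\<^sub>R tprod (e i) (e j)) *v v)
       = v \<bullet> ((\<Sum>i\<in>I. \<Sum>j\<in>I. D i j *\<^sub>R tprod (e i) (e j)) *v w)"
  unfolding Tm_quad[OF assms(1)]
  apply (subst sum.swap)
  using assms(2) by (auto intro!: sum.cong simp: mult.commute mult.left_commute)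

lemma span_zero_orth:
  fixes v :: "'a::euclidean_space"
  assumes "span E = UNIV" "\<forall>x\<in>E. x \<bullet> v = 0" shows "v = 0"
proof -
  have "v \<in> span E" using assms by auto
  then have "orthogonal v v"
    by (rule orthogonal_to_span) (use assms in \<open>auto simp: orthogonal_def inner_commute\<close>)
  then show ?thesis by (simp add: orthogonal_def)
qed

lemma Tm_pd:
  fixes e :: "nat \<Rightarrow> real^'n"
  assumes "finite I" "span (e ` I) = UNIV"
    and pd: "\<forall>\<xi>::nat \<Rightarrow> real. (\<exists>i\<in>I. \<xi> i \<noteq> 0) \<longrightarrow> (\<Sum>i\<in>I. \<Sum>j\<in>I. \<xi> i * D i j * \<xi> j) > 0"
    and "v \<noteq> 0"
  shows "v \<bullet> ((\<Sum>i\<in>I. \<Sum>j\<in>I. D i j *\<^sub>R tprod (e i) (e j)) *v v) > 0"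
proof -
  have "\<exists>i\<in>I. e i \<bullet> v \<noteq> 0"
    using span_zero_orth[of "e ` I" v] assms by auto
  then show ?thesis unfolding Tm_quad[OF assms(1)] using pd[rule_format, of "\<lambda>i. e i \<bullet> v"] by auto
qed

lemma pd_inverse:
  fixes T :: "real^'n^'n"
  assumes "\<And>v. v \<noteq> 0 \<Longrightarrow> v \<bullet> (T *v v) > 0"
  obtains Ti where "\<And>v. T *v (Ti *v v) = v" "\<And>v. Ti *v (T *v v) = v"
proof -
  have "inj ((*v) T)" unfolding vec.inj_iff_eq_0 using assms by force
  then obtain B where B: "B ** T = mat 1" using matrix_left_invertible_injective by blast
  then have "T ** B = mat 1" using matrix_left_right_inverse by blast
  with B show ?thesis using that
    by (metis matrix_vector_mul_assoc matrix_vector_mul_lid)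
qed




lemma ifm1: "(if P then 1 else 0) * (x::real) = (if P then x else 0)" by simp
lemma ifm2: "(x::real) * (if P then 1 else 0) = (if P then x else 0)" by simp
lemma ifs: "(if P then (x::real) else 0) *\<^sub>R (v::'a::real_vector) = (if P then x *\<^sub>R v else 0)" by simp
lemma ifm3: "(if P then (x::real) else 0) * y = (if P then x * y else 0)" by simp
lemma ifm4: "(y::real) * (if P then x else 0) = (if P then y * x else 0)" by simp
lemmas delta_simps = ifm1 ifm2 ifm3 ifm4 ifs sum.delta sum.delta'

lemma basis_coeff_zero:
  fixes e :: "nat \<Rightarrow> real^'n"
  assumes "is_basis M e" "(\<Sum>j\<in>{1..M}. c j *\<^sub>R e j) = 0" "j \<in> {1..M}"
  shows "c j = 0"
proof (rule ccontr)
  assume nz: "c j \<noteq> 0"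
  have inj: "inj_on e {1..M}" and ind: "independent (e ` {1..M})" using assms(1) by (auto simp: is_basis_def)
  define u where "u = (\<lambda>v. c (inv_into {1..M} e v))"
  have "(\<Sum>v\<in>e ` {1..M}. u v *\<^sub>R v) = (\<Sum>j\<in>{1..M}. u (e j) *\<^sub>R e j)"
    by (rule sum.reindex[OF inj, unfolded comp_def])
  also have "\<dots> = (\<Sum>j\<in>{1..M}. c j *\<^sub>R e j)"
    using inv_into_f_f[OF inj] by (intro sum.cong) (auto simp: u_def)
  finally have "(\<Sum>v\<in>e ` {1..M}. u v *\<^sub>R v) = 0" using assms(2) by simp
  moreover have "u (e j) \<noteq> 0" unfolding u_def using nz inv_into_f_f[OF inj assms(3)] by simp
  ultimately have "dependent (e ` {1..M})"
    using assms(3) by (subst dependent_finite) (auto intro!: exI[of _ u])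
  with ind show False by simp
qed

lemma basis_coeff_eq:
  fixes e :: "nat \<Rightarrow> real^'n"
  assumes "is_basis M e" "(\<Sum>j\<in>{1..M}. c j *\<^sub>R e j) = (\<Sum>j\<in>{1..M}. d j *\<^sub>R e j)" "j \<in> {1..M}"
  shows "c j = d j"
proof -
  have "(\<Sum>j\<in>{1..M}. (c j - d j) *\<^sub>R e j) = 0"
    using assms(2) by (simp add: scaleR_diff_left sum_subtractf)
  from basis_coeff_zero[OF assms(1) this assms(3)] show ?thesis by simp
qed

lemma basis_repr:
  fixes e :: "nat \<Rightarrow> real^'n"
  assumes "is_basis M e"
  obtains c where "r = (\<Sum>j\<in>{1..M}. c j *\<^sub>R e j)"
proof -
  have inj: "inj_on e {1..M}" and sp: "span (e ` {1..M}) = UNIV" using assms by (auto simp: is_basis_def)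
  have "r \<in> span (e ` {1..M})" using sp by simp
  then obtain u where "r = (\<Sum>v\<in>e ` {1..M}. u v *\<^sub>R v)" by (auto simp: span_finite)
  also have "\<dots> = (\<Sum>j\<in>{1..M}. u (e j) *\<^sub>R e j)"
    by (rule sum.reindex[OF inj, unfolded comp_def])
  finally have "r = (\<Sum>j\<in>{1..M}. u (e j) *\<^sub>R e j)" .
  then show ?thesis by (rule that)
qed

lemma dual_basis:
  fixes e :: "nat \<Rightarrow> real^'n"
  assumes "is_basis M e"
  obtains f where "\<And>a j. a \<in> {1..M} \<Longrightarrow> j \<in> {1..M} \<Longrightarrow> f a \<bullet> e j = (if a = j then 1 else 0)"
proof -
  define G where "G = (\<Sum>i\<in>{1..M}. \<Sum>j\<in>{1..M}. (if i = j then 1 else 0) *\<^sub>R tprod (e i) (e j))"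
  have sp: "span (e ` {1..M}) = UNIV" using assms by (auto simp: is_basis_def)
  have pd: "\<forall>\<xi>::nat \<Rightarrow> real. (\<exists>i\<in>{1..M}. \<xi> i \<noteq> 0) \<longrightarrow>
      (\<Sum>i\<in>{1..M}. \<Sum>j\<in>{1..M}. \<xi> i * (if i = j then 1 else 0) * \<xi> j) > 0"
  proof (intro allI impI)
    fix \<xi> :: "nat \<Rightarrow> real" assume "\<exists>i\<in>{1..M}. \<xi> i \<noteq> 0"
    then obtain i where i: "i \<in> {1..M}" "\<xi> i \<noteq> 0" by blast
    have "(\<Sum>i\<in>{1..M}. \<Sum>j\<in>{1..M}. \<xi> i * (if i = j then 1 else 0) * \<xi> j) = (\<Sum>i\<in>{1..M}. \<xi> i ^ 2)"
    proof (rule sum.cong[OF refl])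
      fix i assume "i \<in> {1..M}"
      have "(\<Sum>j\<in>{1..M}. \<xi> i * (if i = j then 1 else 0) * \<xi> j) = (\<Sum>j\<in>{1..M}. if i = j then \<xi> i * \<xi> j else 0)"
        by (rule sum.cong) auto
      also have "\<dots> = \<xi> i ^ 2" using \<open>i \<in> {1..M}\<close> by (simp add: power2_eq_square)
      finally show "(\<Sum>j\<in>{1..M}. \<xi> i * (if i = j then 1 else 0) * \<xi> j) = \<xi> i ^ 2" .
    qed
    also have "\<dots> > 0"
      using i by (intro sum_pos2[of _ i]) auto
    finally show "(\<Sum>i\<in>{1..M}. \<Sum>j\<in>{1..M}. \<xi> i * (if i = j then 1 else 0) * \<xi> j) > 0" .
  qed
  have Gpd: "\<And>v. v \<noteq> 0 \<Longrightarrow> v \<bullet> (G *v v) > 0"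
    unfolding G_def by (rule Tm_pd[OF _ sp pd]) auto
  obtain Gi :: "real^'n^'n" where Gi: "\<And>v. G *v (Gi *v v) = v" "\<And>v. Gi *v (G *v v) = v"
    using pd_inverse[of G, OF Gpd] by blast
  have Gm: "G *v v = (\<Sum>i\<in>{1..M}. (e i \<bullet> v) *\<^sub>R e i)" for v
    unfolding G_def Tm_mult[OF finite_atLeastAtMost] by (simp add: delta_simps)
  show ?thesis
  proof (rule that)
    fix a j assume a: "a \<in> {1..M}" and j: "j \<in> {1..M}"
    have "(\<Sum>i\<in>{1..M}. (e i \<bullet> (Gi *v e a)) *\<^sub>R e i) = (\<Sum>i\<in>{1..M}. (if i = a then 1 else 0) *\<^sub>R e i)"
      using Gi[of "e a"] a unfolding Gm by (simp add: delta_simps)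
    from basis_coeff_eq[OF assms this j] show "(Gi *v e a) \<bullet> e j = (if a = j then 1 else 0)"
      by (auto simp: inner_commute)
  qed
qed

lemma basis_dual_repr:
  fixes e :: "nat \<Rightarrow> real^'n"
  assumes "is_basis M e"
    and f: "\<And>a j. a \<in> {1..M} \<Longrightarrow> j \<in> {1..M} \<Longrightarrow> f a \<bullet> e j = (if a = j then 1 else 0)"
  shows "r = (\<Sum>j\<in>{1..M}. (f j \<bullet> r) *\<^sub>R e j)"
proof -
  obtain c where c: "r = (\<Sum>j\<in>{1..M}. c j *\<^sub>R e j)" using basis_repr[OF assms(1)] by blast
  have "f a \<bullet> r = c a" if "a \<in> {1..M}" for a
    using that unfolding c by (simp add: inner_sum_right f if_distrib cong: if_cong)
  then have "(\<Sum>j\<in>{1..M}. (f j \<bullet> r) *\<^sub>R e j) = (\<Sum>j\<in>{1..M}. c j *\<^sub>R e j)" by simp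
  with c show ?thesis by simp
qed

lemma split_last:
  fixes M :: nat
  assumes "M \<ge> 2"
  shows "(\<Sum>i\<in>{1..M}. g i) = (\<Sum>i\<in>{1..M-1}. g i) + g M"
proof -
  have "{1..M} = insert M {1..M-1}" using assms by auto
  then show ?thesis using assms by (simp add: add.commute)
qed




theorem proposition1:
  fixes e :: "nat \<Rightarrow> real^'n" and nv :: "real^'n" and nc :: "nat \<Rightarrow> real"
    and D :: "nat \<Rightarrow> nat \<Rightarrow> real" and M :: nat
  assumes M_def: "M = CARD('n)" and M2: "M \<ge> 2"
    and ebasis: "is_basis M e"
    and n_comp: "nv = (\<Sum>j\<in>{1..M}. nc j *\<^sub>R e j)"
    and n_unit: "norm nv = 1"
    and D_sym: "\<forall>i\<in>{1..M}. \<forall>j\<in>{1..M}. D i j = D j i"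
    and D_pd: "\<forall>\<xi>::nat \<Rightarrow> real. (\<exists>i\<in>{1..M}. \<xi> i \<noteq> 0) \<longrightarrow>
                 (\<Sum>i\<in>{1..M}. \<Sum>j\<in>{1..M}. \<xi> i * D i j * \<xi> j) > 0"
  shows "\<exists>(b :: nat \<Rightarrow> real^'n) (Dc :: nat \<Rightarrow> real).
    is_basis M b
    \<comment> \<open>(1)\<close>
    \<and> (\<forall>\<alpha>\<in>{1..M-1}. \<forall>\<beta>\<in>{1..M-1}. b \<alpha> \<bullet> b \<beta> = (if \<alpha> = \<beta> then 1 else 0))
    \<and> (\<forall>\<alpha>\<in>{1..M-1}. b \<alpha> \<bullet> nv = 0)
    \<and> span (b ` {1..M-1}) = {r. r \<bullet> nv = 0}
    \<and> b M = (1 / omega M e D nc) *\<^sub>R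
              (\<Sum>i\<in>{1..M}. \<Sum>j\<in>{1..M}. (Dmix M e D i j * nc j) *\<^sub>R e i)
    \<and> norm (b M) = 1 \<and> b M \<bullet> nv \<noteq> 0
    \<comment> \<open>(2)\<close>
    \<and> (\<forall>i\<in>{1..M}. Dc i > 0)
    \<and> (\<Sum>i\<in>{1..M}. \<Sum>j\<in>{1..M}. D i j *\<^sub>R tprod (e i) (e j))
        = (\<Sum>i\<in>{1..M}. \<Sum>j\<in>{1..M}. (Dc i * (if i = j then 1 else 0)) *\<^sub>R tprod (b i) (b j))
    \<and> Dc M = (omega M e D nc)\<^sup>2 / (\<Sum>i\<in>{1..M}. \<Sum>j\<in>{1..M}. Dlow M e D i j * nc i * nc j)
    \<comment> \<open>(3)\<close>
    \<and> ((e M = nv \<and> (\<forall>\<alpha>\<in>{1..M-1}. e \<alpha> \<bullet> nv = 0)) \<longrightarrow>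
        D M M > 0 \<and>
        (\<forall>(u :: nat \<Rightarrow> nat \<Rightarrow> real) (ub :: nat \<Rightarrow> nat \<Rightarrow> real).
          (\<forall>\<alpha>\<in>{1..M-1}. e \<alpha> = (\<Sum>\<beta>\<in>{1..M-1}. u \<beta> \<alpha> *\<^sub>R b \<beta>))
          \<and> (\<forall>\<alpha>\<in>{1..M-1}. \<forall>\<beta>\<in>{1..M-1}.
               (\<Sum>\<gamma>\<in>{1..M-1}. ub \<alpha> \<gamma> * u \<gamma> \<beta>) = (if \<alpha> = \<beta> then 1 else 0))
          \<longrightarrow>
          (\<forall>(r :: real^'n) (x :: nat \<Rightarrow> real) (\<zeta> :: nat \<Rightarrow> real).
             r = (\<Sum>\<gamma>\<in>{1..M-1}. x \<gamma> *\<^sub>R e \<gamma>) + x M *\<^sub>R nv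
             \<and> r = (\<Sum>\<gamma>\<in>{1..M-1}. \<zeta> \<gamma> *\<^sub>R b \<gamma>) + \<zeta> M *\<^sub>R b M
             \<longrightarrow>
             (\<forall>\<alpha>\<in>{1..M-1}. \<zeta> \<alpha> = (\<Sum>\<gamma>\<in>{1..M-1}. u \<alpha> \<gamma> * (x \<gamma> - D \<gamma> M / D M M * x M)))
             \<and> \<zeta> M = omega M e D nc / D M M * x M
             \<and> (\<forall>\<alpha>\<in>{1..M-1}. x \<alpha> = (\<Sum>\<gamma>\<in>{1..M-1}. ub \<alpha> \<gamma> * \<zeta> \<gamma>)
                                   + D \<alpha> M / omega M e D nc * \<zeta> M)
             \<and> x M = D M M / omega M e D nc * \<zeta> M)
          \<and> (\<forall>\<alpha>\<in>{1..M-1}. \<forall>\<beta>\<in>{1..M-1}.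
               (\<Sum>\<gamma>\<in>{1..M-1}. ub \<alpha> \<gamma> * ub \<beta> \<gamma> * Dc \<gamma>)
               = D \<alpha> \<beta> - D \<alpha> M * D \<beta> M / D M M)))"
  
proof -
  have finI: "finite {1..M}" by simp
  have Msplit: "{1..M} = insert M {1..M-1}" "M \<notin> {1..M-1}" using M2 by auto
  have espan: "span (e ` {1..M}) = UNIV" using ebasis by (simp add: is_basis_def)
  define T where "T = (\<Sum>i\<in>{1..M}. \<Sum>j\<in>{1..M}. D i j *\<^sub>R tprod (e i) (e j))"
  have Tmult: "\<And>v. T *v v = (\<Sum>i\<in>{1..M}. \<Sum>j\<in>{1..M}. (D i j * (e j \<bullet> v)) *\<^sub>R e i)"
    unfolding T_def by (rule Tm_mult) simp
  have Tsym: "\<And>v w. w \<bullet> (T *v v) = v \<bullet> (T *v w)"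
    unfolding T_def using D_sym by (intro Tm_sym) auto
  have Tpd: "\<And>v. v \<noteq> 0 \<Longrightarrow> v \<bullet> (T *v v) > 0"
    unfolding T_def using espan D_pd by (intro Tm_pd) auto
  obtain Ti :: "real^'n^'n" where Ti: "\<And>v. T *v (Ti *v v) = v" "\<And>v. Ti *v (T *v v) = v"
    using pd_inverse[of T, OF Tpd] by blast
  have Tisym: "\<And>x y. x \<bullet> (Ti *v y) = y \<bullet> (Ti *v x)"
  proof -
    fix x y
    have "x \<bullet> (Ti *v y) = (T *v (Ti *v x)) \<bullet> (Ti *v y)" by (simp add: Ti)
    also have "\<dots> = (Ti *v y) \<bullet> (T *v (Ti *v x))" by (simp add: inner_commute)
    also have "\<dots> = (Ti *v x) \<bullet> (T *v (Ti *v y))" by (rule Tsym)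
    also have "\<dots> = y \<bullet> (Ti *v x)" by (simp add: Ti inner_commute)
    finally show "x \<bullet> (Ti *v y) = y \<bullet> (Ti *v x)" .
  qed
  have Tipd: "\<And>v. v \<noteq> 0 \<Longrightarrow> v \<bullet> (Ti *v v) > 0"
  proof -
    fix v :: "real^'n" assume "v \<noteq> 0"
    then have "Ti *v v \<noteq> 0" using Ti(1)[of v] by auto
    then have "(Ti *v v) \<bullet> (T *v (Ti *v v)) > 0" by (rule Tpd)
    then show "v \<bullet> (Ti *v v) > 0" by (simp add: Ti inner_commute)
  qed
  have nv0: "nv \<noteq> 0" using n_unit by auto
  have nvnv: "nv \<bullet> nv = 1" using n_unit by (simp add: norm_eq_1)
  define Tn where "Tn = T *v nv"
  have TiTn: "Ti *v Tn = nv" by (simp add: Tn_def Ti)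
  have Tn0: "Tn \<noteq> 0" using TiTn nv0 by auto
  define nTn where "nTn = nv \<bullet> Tn"
  have nTn_pos: "nTn > 0" using Tpd[OF nv0] by (simp add: nTn_def Tn_def)
  have enc: "\<And>k. e k \<bullet> nv = (\<Sum>j\<in>{1..M}. nc j * gmet e k j)"
    by (simp add: n_comp inner_sum_right gmet_def)
  have coef: "\<And>i. (\<Sum>j\<in>{1..M}. Dmix M e D i j * nc j) = (\<Sum>j\<in>{1..M}. D i j * (e j \<bullet> nv))"
  proof -
    fix i
    have "(\<Sum>j\<in>{1..M}. Dmix M e D i j * nc j) = (\<Sum>j\<in>{1..M}. \<Sum>k\<in>{1..M}. D i k * gmet e k j * nc j)"
      by (simp add: Dmix_def sum_distrib_right)
    also have "\<dots> = (\<Sum>k\<in>{1..M}. \<Sum>j\<in>{1..M}. D i k * gmet e k j * nc j)"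
      by (rule sum.swap)
    also have "\<dots> = (\<Sum>j\<in>{1..M}. D i j * (e j \<bullet> nv))"
      by (simp add: enc sum_distrib_left mult_ac)
    finally show "(\<Sum>j\<in>{1..M}. Dmix M e D i j * nc j) = (\<Sum>j\<in>{1..M}. D i j * (e j \<bullet> nv))" .
  qed
  have Tn_alt: "Tn = (\<Sum>i\<in>{1..M}. (\<Sum>j\<in>{1..M}. Dmix M e D i j * nc j) *\<^sub>R e i)"
    unfolding coef Tn_def Tmult by (simp add: scaleR_sum_left)
  have Dmix_eq: "(\<Sum>i\<in>{1..M}. \<Sum>j\<in>{1..M}. (Dmix M e D i j * nc j) *\<^sub>R e i) = Tn"
    unfolding Tn_alt by (simp add: scaleR_sum_left)
  have omega_eq: "omega M e D nc = norm Tn"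
  proof -
    have "Tn \<bullet> Tn = (\<Sum>i\<in>{1..M}. \<Sum>j\<in>{1..M}. \<Sum>p\<in>{1..M}. \<Sum>k\<in>{1..M}.
      gmet e i j * Dmix M e D i p * Dmix M e D j k * nc p * nc k)"
      unfolding Tn_alt
      apply (simp add: inner_sum_left inner_sum_right gmet_def sum_distrib_left sum_distrib_right mult_ac)
      apply (rule sum.cong[OF refl])
      apply (rule sum.cong[OF refl])
      apply (subst sum.swap)
      apply (simp add: inner_commute mult_ac)
      done
    then show ?thesis by (simp add: omega_def norm_eq_sqrt_inner)
  qed
  have mv_sum: "\<And>A (f :: nat \<Rightarrow> real^'n). finite A \<Longrightarrow> T *v (\<Sum>a\<in>A. f a) = (\<Sum>a\<in>A. T *v f a)"
  proof -
    fix A :: "nat set" and f :: "nat \<Rightarrow> real^'n" assume "finite A"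
    then show "T *v (\<Sum>a\<in>A. f a) = (\<Sum>a\<in>A. T *v f a)"
      by (induction A rule: finite_induct) (auto simp: matrix_vector_right_distrib)
  qed
  have Dlow_inner: "\<And>a c. Dlow M e D a c = e a \<bullet> (T *v e c)"
    unfolding Dlow_def Tmult gmet_def by (simp add: inner_sum_right inner_commute mult_ac)
  have Dlow_eq: "(\<Sum>i\<in>{1..M}. \<Sum>j\<in>{1..M}. Dlow M e D i j * nc i * nc j) = nTn"
  proof -
    have "nTn = (\<Sum>i\<in>{1..M}. nc i *\<^sub>R e i) \<bullet> (\<Sum>j\<in>{1..M}. nc j *\<^sub>R (T *v e j))"
      unfolding nTn_def Tn_def n_comp by (simp add: mv_sum mv_scale)
    also have "\<dots> = (\<Sum>i\<in>{1..M}. \<Sum>j\<in>{1..M}. Dlow M e D i j * nc i * nc j)"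
      unfolding Dlow_inner
      apply (simp add: inner_sum_left inner_sum_right sum_distrib_left mult_ac)
      apply (subst sum.swap)
      apply (simp add: mult_ac)
      done
    finally show ?thesis by simp
  qed
  define \<omega> where "\<omega> = norm Tn"
  have om_pos: "\<omega> > 0" using Tn0 by (simp add: \<omega>_def)
  define bM where "bM = (1/\<omega>) *\<^sub>R Tn"
  have bM_nv: "bM \<bullet> nv = nTn / \<omega>" by (simp add: bM_def nTn_def inner_commute)
  have Ti_bM: "Ti *v bM = (1/\<omega>) *\<^sub>R nv" by (simp add: bM_def mv_scale TiTn)
  have bM_norm: "norm bM = 1" using om_pos by (simp add: bM_def \<omega>_def)
  define Ups where "Ups = {r::real^'n. r \<bullet> nv = 0}"
  have subU: "subspace Ups" unfolding Ups_def subspace_def by (auto simp: inner_add_left)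
  have dimU: "dim Ups = M - 1"
  proof -
    have "Ups = {x. nv \<bullet> x = 0}" by (auto simp: Ups_def inner_commute)
    then show ?thesis using dim_hyperplane[OF nv0] M_def by simp
  qed
  obtain B where B: "B \<subseteq> Ups" "pairwise orthogonal B" "\<forall>x\<in>B. norm x = 1" "independent B" "finite B"
     "span B = Ups" "\<forall>x\<in>B. \<forall>y\<in>B. x \<noteq> y \<longrightarrow> x \<bullet> (Ti *v y) = 0"
    using spectral_sub[of Ti, OF Tisym subU] by blast
  have cardB: "card B = M - 1"
  proof -
    have "card B = dim B" using B(4) by (simp add: dim_eq_card_independent)
    also have "\<dots> = dim (span B)" by simp
    finally show ?thesis using B(6) dimU by simp
  qed
  obtain h where h: "bij_betw h {1..M-1} B"
    using finite_same_card_bij[of "{1..M-1}" B] B(5) cardB by auto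
  define b where "b = (\<lambda>i. if i = M then bM else h i)"
  define Dc where "Dc = (\<lambda>i. if i = M then \<omega>^2 / nTn else 1 / (b i \<bullet> (Ti *v b i)))"
  have bJ: "\<And>a. a \<in> {1..M-1} \<Longrightarrow> b a = h a \<and> h a \<in> B"
    using h M2 by (auto simp: b_def bij_betw_def)
  have bimgJ: "b ` {1..M-1} = B"
  proof -
    have "b ` {1..M-1} = h ` {1..M-1}" using bJ by (auto simp: image_def)
    then show ?thesis using h by (simp add: bij_betw_def)
  qed
  have bM': "b M = bM" by (simp add: b_def)
  have bUps: "\<And>a. a \<in> {1..M-1} \<Longrightarrow> b a \<bullet> nv = 0"
    using bJ B(1) by (auto simp: Ups_def)
  have bnorm: "\<And>a. a \<in> {1..M} \<Longrightarrow> norm (b a) = 1"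
  proof -
    fix a assume a: "a \<in> {1..M}"
    show "norm (b a) = 1"
    proof (cases "a = M")
      case True then show ?thesis using bM' bM_norm by simp
    next
      case False then have "a \<in> {1..M-1}" using a by auto
      then show ?thesis using bJ B(3) by auto
    qed
  qed
  have borth: "\<And>a c. a \<in> {1..M-1} \<Longrightarrow> c \<in> {1..M-1} \<Longrightarrow> b a \<bullet> b c = (if a = c then 1 else 0)"
  proof -
    fix a c assume a: "a \<in> {1..M-1}" and c: "c \<in> {1..M-1}"
    show "b a \<bullet> b c = (if a = c then 1 else 0)"
    proof (cases "a = c")
      case True
      have "a \<in> {1..M}" using a by auto
      then have "norm (b a) = 1" by (rule bnorm)
      then show ?thesis using True by (simp add: norm_eq_1)
    next
      case False
      then have "h a \<noteq> h c" using h a c by (auto simp: bij_betw_def inj_on_def)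
      then show ?thesis using False B(2) bJ[OF a] bJ[OF c] by (auto simp: pairwise_def orthogonal_def)
    qed
  qed
  have bM_notin: "bM \<notin> span B"
    using B(6) bM_nv nTn_pos om_pos by (auto simp: Ups_def)
  have bimgI: "b ` {1..M} = insert bM B"
    using Msplit bimgJ bM' by auto
  have b_basis: "is_basis M b"
  proof -
    have hinj: "inj_on h {1..M-1}" using h by (rule bij_betw_imp_inj_on)
    have "inj_on b {1..M-1}"
    proof (rule inj_onI)
      fix x y assume x: "x \<in> {1..M-1}" and y: "y \<in> {1..M-1}" and "b x = b y"
      then have "h x = h y" using bJ[OF x] bJ[OF y] by simp
      then show "x = y" using inj_onD[OF hinj _ x y] by simp
    qed
    moreover have "b M \<notin> b ` ({1..M-1} - {M})"
    proof -
      have "{1..M-1} - {M} = {1..M-1}" using Msplit(2) by blast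
      moreover have "bM \<notin> B" using bM_notin span_base by blast
      ultimately show ?thesis using bimgJ bM' by simp
    qed
    ultimately have inj: "inj_on b {1..M}" using Msplit by (simp add: inj_on_insert)
    have ind: "independent (b ` {1..M})"
      unfolding bimgI using B(4) bM_notin by (simp add: independent_insert span_base)
    have "card (b ` {1..M}) = M" using card_image[OF inj] by simp
    then have "UNIV \<subseteq> span (b ` {1..M})"
      using card_ge_dim_independent[of "b ` {1..M}" UNIV] ind M_def by (simp add: dim_UNIV)
    then show ?thesis using inj ind by (auto simp: is_basis_def)
  qed

  have bTib: "\<And>i j. i \<in> {1..M} \<Longrightarrow> j \<in> {1..M} \<Longrightarrow> i \<noteq> j \<Longrightarrow> b i \<bullet> (Ti *v b j) = 0"
  proof -
    fix i j assume i: "i \<in> {1..M}" and j: "j \<in> {1..M}" and ij: "i \<noteq> j"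
    show "b i \<bullet> (Ti *v b j) = 0"
    proof (cases "i = M")
      case True
      then have jJ: "j \<in> {1..M-1}" using j ij by auto
      have "b i \<bullet> (Ti *v b j) = b j \<bullet> (Ti *v b i)" by (rule Tisym)
      also have "\<dots> = 0" using True bM' Ti_bM bUps[OF jJ] by simp
      finally show ?thesis .
    next
      case False
      then have iJ: "i \<in> {1..M-1}" using i by auto
      show ?thesis
      proof (cases "j = M")
        case True
        then show ?thesis using bM' Ti_bM bUps[OF iJ] by simp
      next
        case False
        then have jJ: "j \<in> {1..M-1}" using j by auto
        have "h i \<noteq> h j" using h iJ jJ ij by (auto simp: bij_betw_def inj_on_def)
        then show ?thesis using B(7) bJ[OF iJ] bJ[OF jJ] by auto
      qed
    qed
  qed
  have Dc_diag: "\<And>j. j \<in> {1..M} \<Longrightarrow> Dc j * (b j \<bullet> (Ti *v b j)) = 1"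
  proof -
    fix j assume j: "j \<in> {1..M}"
    show "Dc j * (b j \<bullet> (Ti *v b j)) = 1"
    proof (cases "j = M")
      case True
      have "b j \<bullet> (Ti *v b j) = nTn / \<omega>^2"
        using True bM' Ti_bM bM_nv by (simp add: power2_eq_square)
      then show ?thesis using True om_pos nTn_pos by (simp add: Dc_def)
    next
      case False
      have "b j \<noteq> 0" using bnorm[OF j] by auto
      then have "b j \<bullet> (Ti *v b j) > 0" by (rule Tipd)
      then show ?thesis using False by (simp add: Dc_def)
    qed
  qed
  have Dc_pos: "\<forall>i\<in>{1..M}. Dc i > 0"
  proof
    fix i assume i: "i \<in> {1..M}"
    show "Dc i > 0"
    proof (cases "i = M")
      case True then show ?thesis using om_pos nTn_pos by (simp add: Dc_def)
    next
      case False
      have "b i \<noteq> 0" using bnorm[OF i] by auto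
      then have "b i \<bullet> (Ti *v b i) > 0" by (rule Tipd)
      then show ?thesis using False by (simp add: Dc_def)
    qed
  qed
  define R where "R = (\<Sum>i\<in>{1..M}. \<Sum>j\<in>{1..M}. (Dc i * (if i = j then 1 else 0)) *\<^sub>R tprod (b i) (b j))"
  have Rmult: "\<And>v. R *v v = (\<Sum>i\<in>{1..M}. (Dc i * (b i \<bullet> v)) *\<^sub>R b i)"
    unfolding R_def Tm_mult[OF finI] by (simp add: delta_simps)
  have TR: "T = R"
  proof -
    have agree: "T *v w = R *v w" if wm: "w \<in> (*v) Ti ` (b ` {1..M})" for w
    proof -
      obtain j where j: "j \<in> {1..M}" and w: "w = Ti *v b j" using wm by auto
      have "R *v w = (\<Sum>i\<in>{1..M}. if i = j then b j else 0)"
        unfolding Rmult w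
      proof (rule sum.cong[OF refl])
        fix i assume i: "i \<in> {1..M}"
        show "(Dc i * (b i \<bullet> (Ti *v b j))) *\<^sub>R b i = (if i = j then b j else 0)"
          using bTib[OF i j] Dc_diag[OF j] by auto
      qed
      also have "\<dots> = b j" using j by simp
      finally show ?thesis using w Ti by simp
    qed
    have spw: "span ((*v) Ti ` (b ` {1..M})) = UNIV"
    proof -
      have "span ((*v) Ti ` (b ` {1..M})) = (*v) Ti ` span (b ` {1..M})"
        by (rule linear_span_image) (rule matrix_vector_mul_linear)
      also have "\<dots> = UNIV" using b_basis Ti(2)
        by (auto simp: is_basis_def image_def intro!: exI[where x="T *v _"])
      finally show ?thesis .
    qed
    have "T *v v = R *v v" for v
      using real_vector.linear_eq_on_span[where f="(*v) T" and g="(*v) R" and B="(*v) Ti ` (b ` {1..M})",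
          OF matrix_vector_mul_linear matrix_vector_mul_linear] agree spw by auto
    then show ?thesis by (simp add: matrix_eq)
  qed
  have part3: "((e M = nv \<and> (\<forall>\<alpha>\<in>{1..M-1}. e \<alpha> \<bullet> nv = 0)) \<longrightarrow>
        D M M > 0 \<and>
        (\<forall>(u :: nat \<Rightarrow> nat \<Rightarrow> real) (ub :: nat \<Rightarrow> nat \<Rightarrow> real).
          (\<forall>\<alpha>\<in>{1..M-1}. e \<alpha> = (\<Sum>\<beta>\<in>{1..M-1}. u \<beta> \<alpha> *\<^sub>R b \<beta>))
          \<and> (\<forall>\<alpha>\<in>{1..M-1}. \<forall>\<beta>\<in>{1..M-1}.
               (\<Sum>\<gamma>\<in>{1..M-1}. ub \<alpha> \<gamma> * u \<gamma> \<beta>) = (if \<alpha> = \<beta> then 1 else 0))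
          \<longrightarrow>
          (\<forall>(r :: real^'n) (x :: nat \<Rightarrow> real) (\<zeta> :: nat \<Rightarrow> real).
             r = (\<Sum>\<gamma>\<in>{1..M-1}. x \<gamma> *\<^sub>R e \<gamma>) + x M *\<^sub>R nv
             \<and> r = (\<Sum>\<gamma>\<in>{1..M-1}. \<zeta> \<gamma> *\<^sub>R b \<gamma>) + \<zeta> M *\<^sub>R b M
             \<longrightarrow>
             (\<forall>\<alpha>\<in>{1..M-1}. \<zeta> \<alpha> = (\<Sum>\<gamma>\<in>{1..M-1}. u \<alpha> \<gamma> * (x \<gamma> - D \<gamma> M / D M M * x M)))
             \<and> \<zeta> M = omega M e D nc / D M M * x M
             \<and> (\<forall>\<alpha>\<in>{1..M-1}. x \<alpha> = (\<Sum>\<gamma>\<in>{1..M-1}. ub \<alpha> \<gamma> * \<zeta> \<gamma>)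
                                   + D \<alpha> M / omega M e D nc * \<zeta> M)
             \<and> x M = D M M / omega M e D nc * \<zeta> M)
          \<and> (\<forall>\<alpha>\<in>{1..M-1}. \<forall>\<beta>\<in>{1..M-1}.
               (\<Sum>\<gamma>\<in>{1..M-1}. ub \<alpha> \<gamma> * ub \<beta> \<gamma> * Dc \<gamma>)
               = D \<alpha> \<beta> - D \<alpha> M * D \<beta> M / D M M)))"
  proof (rule impI)
    assume hyp: "e M = nv \<and> (\<forall>\<alpha>\<in>{1..M-1}. e \<alpha> \<bullet> nv = 0)"
    have eM: "e M = nv" and eJ: "\<And>a. a \<in> {1..M-1} \<Longrightarrow> e a \<bullet> nv = 0" using hyp by auto
    have enM: "\<And>j. j \<in> {1..M} \<Longrightarrow> e j \<bullet> nv = (if j = M then 1 else 0)"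
    proof -
      fix j assume j: "j \<in> {1..M}"
      show "e j \<bullet> nv = (if j = M then 1 else 0)"
      proof (cases "j = M")
        case True then show ?thesis using eM nvnv by simp
      next
        case False then have "j \<in> {1..M-1}" using j by auto
        then show ?thesis using eJ False by simp
      qed
    qed
    have MI: "M \<in> {1..M}" using M2 by simp
    have DMM: "D M M > 0"
    proof -
      have "(\<Sum>i\<in>{1..M}. \<Sum>j\<in>{1..M}. (if i = M then 1 else 0) * D i j * (if j = M then 1 else 0)) > 0"
        using MI by (intro D_pd[rule_format]) auto
      then show ?thesis using MI by (simp add: delta_simps)
    qed
    have Tn_e: "Tn = (\<Sum>i\<in>{1..M}. D i M *\<^sub>R e i)"
      unfolding Tn_def Tmult
    proof (rule sum.cong[OF refl])
      fix i
      have "(\<Sum>j\<in>{1..M}. (D i j * (e j \<bullet> nv)) *\<^sub>R e i) = (\<Sum>j\<in>{1..M}. if j = M then D i M *\<^sub>R e i else 0)"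
        by (rule sum.cong) (auto simp: enM)
      also have "\<dots> = D i M *\<^sub>R e i" using MI by simp
      finally show "(\<Sum>j\<in>{1..M}. (D i j * (e j \<bullet> nv)) *\<^sub>R e i) = D i M *\<^sub>R e i" .
    qed
    have nTn_D: "nTn = D M M"
    proof -
      have "nTn = (\<Sum>i\<in>{1..M}. D i M * (e i \<bullet> nv))"
        unfolding nTn_def Tn_e by (simp add: inner_sum_right inner_commute)
      also have "\<dots> = (\<Sum>i\<in>{1..M}. if i = M then D M M else 0)"
        by (rule sum.cong) (auto simp: enM)
      also have "\<dots> = D M M" using MI by simp
      finally show ?thesis .
    qed
    have Tn_split: "Tn = (\<Sum>g\<in>{1..M-1}. D g M *\<^sub>R e g) + D M M *\<^sub>R nv"
      unfolding Tn_e split_last[OF M2] eM ..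
    have om_eq: "omega M e D nc = \<omega>" by (simp add: omega_eq \<omega>_def)
    have DcM: "Dc M = \<omega>^2 / D M M" by (simp add: Dc_def nTn_D)
    obtain f where f: "\<And>a j. a \<in> {1..M} \<Longrightarrow> j \<in> {1..M} \<Longrightarrow> f a \<bullet> e j = (if a = j then 1 else 0)"
      using dual_basis[OF ebasis] by blast
    have eb_gen: "\<And>u a d. (\<forall>\<alpha>\<in>{1..M-1}. e \<alpha> = (\<Sum>\<beta>\<in>{1..M-1}. u \<beta> \<alpha> *\<^sub>R b \<beta>)) \<Longrightarrow>
        a \<in> {1..M-1} \<Longrightarrow> d \<in> {1..M-1} \<Longrightarrow> e a \<bullet> b d = u d a"
    proof -
      fix u :: "nat \<Rightarrow> nat \<Rightarrow> real" and a d
      assume hu: "\<forall>\<alpha>\<in>{1..M-1}. e \<alpha> = (\<Sum>\<beta>\<in>{1..M-1}. u \<beta> \<alpha> *\<^sub>R b \<beta>)"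
        and a: "a \<in> {1..M-1}" and d: "d \<in> {1..M-1}"
      have "e a \<bullet> b d = (\<Sum>\<beta>\<in>{1..M-1}. u \<beta> a * (b \<beta> \<bullet> b d))"
        using hu a by (simp add: inner_sum_left)
      also have "\<dots> = (\<Sum>\<beta>\<in>{1..M-1}. if \<beta> = d then u d a else 0)"
      proof (rule sum.cong[OF refl])
        fix \<beta> assume \<beta>: "\<beta> \<in> {1..M-1}"
        show "u \<beta> a * (b \<beta> \<bullet> b d) = (if \<beta> = d then u d a else 0)" using borth[OF \<beta> d] by simp
      qed
      also have "\<dots> = u d a" using d by simp
      finally show "e a \<bullet> b d = u d a" .
    qed
    have keyA: "\<And>u ub r x \<zeta>. (\<forall>\<alpha>\<in>{1..M-1}. e \<alpha> = (\<Sum>\<beta>\<in>{1..M-1}. u \<beta> \<alpha> *\<^sub>R b \<beta>)) \<Longrightarrow>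
      (\<forall>\<alpha>\<in>{1..M-1}. \<forall>\<beta>\<in>{1..M-1}. (\<Sum>\<gamma>\<in>{1..M-1}. ub \<alpha> \<gamma> * u \<gamma> \<beta>) = (if \<alpha> = \<beta> then 1 else 0)) \<Longrightarrow>
      r = (\<Sum>\<gamma>\<in>{1..M-1}. x \<gamma> *\<^sub>R e \<gamma>) + x M *\<^sub>R nv \<Longrightarrow>
      r = (\<Sum>\<gamma>\<in>{1..M-1}. \<zeta> \<gamma> *\<^sub>R b \<gamma>) + \<zeta> M *\<^sub>R b M \<Longrightarrow>
             (\<forall>\<alpha>\<in>{1..M-1}. \<zeta> \<alpha> = (\<Sum>\<gamma>\<in>{1..M-1}. u \<alpha> \<gamma> * (x \<gamma> - D \<gamma> M / D M M * x M)))
             \<and> \<zeta> M = omega M e D nc / D M M * x M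
             \<and> (\<forall>\<alpha>\<in>{1..M-1}. x \<alpha> = (\<Sum>\<gamma>\<in>{1..M-1}. ub \<alpha> \<gamma> * \<zeta> \<gamma>)
                                   + D \<alpha> M / omega M e D nc * \<zeta> M)
             \<and> x M = D M M / omega M e D nc * \<zeta> M"
    proof -
      fix u ub :: "nat \<Rightarrow> nat \<Rightarrow> real" and r :: "real^'n" and x \<zeta> :: "nat \<Rightarrow> real"
      assume hu: "\<forall>\<alpha>\<in>{1..M-1}. e \<alpha> = (\<Sum>\<beta>\<in>{1..M-1}. u \<beta> \<alpha> *\<^sub>R b \<beta>)"
        and hub: "\<forall>\<alpha>\<in>{1..M-1}. \<forall>\<beta>\<in>{1..M-1}. (\<Sum>\<gamma>\<in>{1..M-1}. ub \<alpha> \<gamma> * u \<gamma> \<beta>) = (if \<alpha> = \<beta> then 1 else 0)"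
        and r1: "r = (\<Sum>\<gamma>\<in>{1..M-1}. x \<gamma> *\<^sub>R e \<gamma>) + x M *\<^sub>R nv"
        and r2: "r = (\<Sum>\<gamma>\<in>{1..M-1}. \<zeta> \<gamma> *\<^sub>R b \<gamma>) + \<zeta> M *\<^sub>R b M"
      have rnv1: "r \<bullet> nv = x M"
        unfolding r1 by (simp add: inner_add_left inner_sum_left eJ nvnv)
      have rnv2: "r \<bullet> nv = \<zeta> M * (D M M / \<omega>)"
        unfolding r2 by (simp add: inner_add_left inner_sum_left bUps bM' bM_nv nTn_D)
      have zM: "\<zeta> M = \<omega> / D M M * x M"
        using rnv1 rnv2 DMM om_pos by (simp add: field_simps)
      have xM: "x M = D M M / \<omega> * \<zeta> M"
        using rnv1 rnv2 DMM om_pos by (simp add: field_simps)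
      define y where "y = (\<lambda>g. x g - D g M / D M M * x M)"
      have rr: "r - \<zeta> M *\<^sub>R bM = (\<Sum>g\<in>{1..M-1}. y g *\<^sub>R e g)"
      proof -
        have "\<zeta> M *\<^sub>R bM = (x M / D M M) *\<^sub>R Tn"
          using zM om_pos DMM by (simp add: bM_def field_simps)
        also have "\<dots> = (\<Sum>g\<in>{1..M-1}. (x M / D M M * D g M) *\<^sub>R e g) + x M *\<^sub>R nv"
          unfolding Tn_split using DMM by (simp add: scaleR_add_right scaleR_sum_right)
        finally have "\<zeta> M *\<^sub>R bM = (\<Sum>g\<in>{1..M-1}. (x M / D M M * D g M) *\<^sub>R e g) + x M *\<^sub>R nv" .
        then show ?thesis unfolding r1 y_def
          by (simp add: scaleR_diff_left sum_subtractf algebra_simps)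
      qed
      have rz: "r - \<zeta> M *\<^sub>R bM = (\<Sum>g\<in>{1..M-1}. \<zeta> g *\<^sub>R b g)"
        unfolding r2 bM' by simp
      have zA: "\<zeta> a = (\<Sum>g\<in>{1..M-1}. u a g * y g)" if a: "a \<in> {1..M-1}" for a
      proof -
        have "(r - \<zeta> M *\<^sub>R bM) \<bullet> b a = \<zeta> a"
        proof -
          have "(r - \<zeta> M *\<^sub>R bM) \<bullet> b a = (\<Sum>g\<in>{1..M-1}. \<zeta> g * (b g \<bullet> b a))"
            unfolding rz by (simp add: inner_sum_left)
          also have "\<dots> = (\<Sum>g\<in>{1..M-1}. if g = a then \<zeta> a else 0)"
          proof (rule sum.cong[OF refl])
            fix g assume g: "g \<in> {1..M-1}"
            show "\<zeta> g * (b g \<bullet> b a) = (if g = a then \<zeta> a else 0)" using borth[OF g a] by simp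
          qed
          finally show ?thesis using a by simp
        qed
        moreover have "(r - \<zeta> M *\<^sub>R bM) \<bullet> b a = (\<Sum>g\<in>{1..M-1}. u a g * y g)"
          unfolding rr by (auto simp: inner_sum_left eb_gen[OF hu _ a] intro!: sum.cong)
        ultimately show ?thesis by simp
      qed
      have xA: "x a = (\<Sum>g\<in>{1..M-1}. ub a g * \<zeta> g) + D a M / \<omega> * \<zeta> M" if a: "a \<in> {1..M-1}" for a
      proof -
        have "(\<Sum>g\<in>{1..M-1}. ub a g * \<zeta> g) = (\<Sum>g\<in>{1..M-1}. \<Sum>d\<in>{1..M-1}. ub a g * u g d * y d)"
          by (simp add: zA sum_distrib_left mult.assoc)
        also have "\<dots> = (\<Sum>d\<in>{1..M-1}. \<Sum>g\<in>{1..M-1}. ub a g * u g d * y d)"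
          by (rule sum.swap)
        also have "\<dots> = (\<Sum>d\<in>{1..M-1}. (\<Sum>g\<in>{1..M-1}. ub a g * u g d) * y d)"
          by (simp add: sum_distrib_right)
        also have "\<dots> = (\<Sum>d\<in>{1..M-1}. if a = d then y d else 0)"
          using hub a by (intro sum.cong) auto
        also have "\<dots> = y a" using a by simp
        finally have "(\<Sum>g\<in>{1..M-1}. ub a g * \<zeta> g) = y a" .
        moreover have "D a M / D M M * x M = D a M / \<omega> * \<zeta> M"
          using xM om_pos DMM by (simp add: field_simps)
        ultimately show ?thesis by (simp add: y_def)
      qed
      show "(\<forall>\<alpha>\<in>{1..M-1}. \<zeta> \<alpha> = (\<Sum>\<gamma>\<in>{1..M-1}. u \<alpha> \<gamma> * (x \<gamma> - D \<gamma> M / D M M * x M)))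
             \<and> \<zeta> M = omega M e D nc / D M M * x M
             \<and> (\<forall>\<alpha>\<in>{1..M-1}. x \<alpha> = (\<Sum>\<gamma>\<in>{1..M-1}. ub \<alpha> \<gamma> * \<zeta> \<gamma>)
                                   + D \<alpha> M / omega M e D nc * \<zeta> M)
             \<and> x M = D M M / omega M e D nc * \<zeta> M"
        unfolding om_eq
      proof (intro conjI ballI)
        fix a assume a: "a \<in> {1..M-1}"
        show "\<zeta> a = (\<Sum>\<gamma>\<in>{1..M-1}. u a \<gamma> * (x \<gamma> - D \<gamma> M / D M M * x M))"
          using zA[OF a] unfolding y_def .
      next
        show "\<zeta> M = \<omega> / D M M * x M" by (rule zM)
      next
        fix a assume a: "a \<in> {1..M-1}"
        show "x a = (\<Sum>\<gamma>\<in>{1..M-1}. ub a \<gamma> * \<zeta> \<gamma>) + D a M / \<omega> * \<zeta> M"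
          by (rule xA[OF a])
      next
        show "x M = D M M / \<omega> * \<zeta> M" by (rule xM)
      qed
    qed
    have keyB: "\<And>u ub. (\<forall>\<alpha>\<in>{1..M-1}. e \<alpha> = (\<Sum>\<beta>\<in>{1..M-1}. u \<beta> \<alpha> *\<^sub>R b \<beta>)) \<Longrightarrow>
      (\<forall>\<alpha>\<in>{1..M-1}. \<forall>\<beta>\<in>{1..M-1}. (\<Sum>\<gamma>\<in>{1..M-1}. ub \<alpha> \<gamma> * u \<gamma> \<beta>) = (if \<alpha> = \<beta> then 1 else 0)) \<Longrightarrow>
      (\<forall>\<alpha>\<in>{1..M-1}. \<forall>\<beta>\<in>{1..M-1}.
               (\<Sum>\<gamma>\<in>{1..M-1}. ub \<alpha> \<gamma> * ub \<beta> \<gamma> * Dc \<gamma>)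
               = D \<alpha> \<beta> - D \<alpha> M * D \<beta> M / D M M)"
    proof -
      fix u ub :: "nat \<Rightarrow> nat \<Rightarrow> real"
      assume hu: "\<forall>\<alpha>\<in>{1..M-1}. e \<alpha> = (\<Sum>\<beta>\<in>{1..M-1}. u \<beta> \<alpha> *\<^sub>R b \<beta>)"
        and hub: "\<forall>\<alpha>\<in>{1..M-1}. \<forall>\<beta>\<in>{1..M-1}. (\<Sum>\<gamma>\<in>{1..M-1}. ub \<alpha> \<gamma> * u \<gamma> \<beta>) = (if \<alpha> = \<beta> then 1 else 0)"
      define c where "c = (\<lambda>a g. f a \<bullet> b g)"
      have brep: "\<And>g. b g = (\<Sum>j\<in>{1..M}. (f j \<bullet> b g) *\<^sub>R e j)"
        by (rule basis_dual_repr[OF ebasis f])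
      have fMb: "f M \<bullet> b g = 0" if g: "g \<in> {1..M-1}" for g
      proof -
        have "b g \<bullet> nv = (\<Sum>j\<in>{1..M}. (f j \<bullet> b g) *\<^sub>R e j) \<bullet> nv"
          using brep[of g] by (rule arg_cong[where f="\<lambda>v. v \<bullet> nv"])
        also have "\<dots> = (\<Sum>j\<in>{1..M}. (f j \<bullet> b g) * (e j \<bullet> nv))" by (simp add: inner_sum_left)
        also have "\<dots> = (\<Sum>j\<in>{1..M}. if j = M then f M \<bullet> b g else 0)"
          by (rule sum.cong) (auto simp: enM)
        also have "\<dots> = f M \<bullet> b g" using MI by simp
        finally show ?thesis using bUps[OF g] by simp
      qed
      have brepJ: "b g = (\<Sum>a\<in>{1..M-1}. c a g *\<^sub>R e a)" if g: "g \<in> {1..M-1}" for g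
      proof -
        have "b g = (\<Sum>j\<in>{1..M}. (f j \<bullet> b g) *\<^sub>R e j)" by (rule brep)
        also have "\<dots> = (\<Sum>a\<in>{1..M-1}. (f a \<bullet> b g) *\<^sub>R e a) + (f M \<bullet> b g) *\<^sub>R e M" by (rule split_last[OF M2])
        also have "\<dots> = (\<Sum>a\<in>{1..M-1}. c a g *\<^sub>R e a)" using fMb[OF g] by (simp add: c_def)
        finally show ?thesis .
      qed
      have uc: "(\<Sum>a\<in>{1..M-1}. u d a * c a g) = (if d = g then 1 else 0)"
        if d: "d \<in> {1..M-1}" and g: "g \<in> {1..M-1}" for d g
      proof -
        have "b g \<bullet> b d = (\<Sum>a\<in>{1..M-1}. c a g *\<^sub>R e a) \<bullet> b d"
          using brepJ[OF g] by (rule arg_cong[where f="\<lambda>v. v \<bullet> b d"])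
        also have "\<dots> = (\<Sum>a\<in>{1..M-1}. c a g * (e a \<bullet> b d))" by (simp add: inner_sum_left)
        also have "\<dots> = (\<Sum>a\<in>{1..M-1}. u d a * c a g)"
        proof (rule sum.cong[OF refl])
          fix a assume a: "a \<in> {1..M-1}"
          show "c a g * (e a \<bullet> b d) = u d a * c a g" using eb_gen[OF hu a d] by simp
        qed
        finally show ?thesis using borth[OF g d] by auto
      qed
      have ubc: "ub a g = c a g" if a: "a \<in> {1..M-1}" and g: "g \<in> {1..M-1}" for a g
      proof -
        have "ub a g = (\<Sum>d\<in>{1..M-1}. ub a d * (if d = g then 1 else 0))" using g by (simp add: delta_simps)
        also have "\<dots> = (\<Sum>d\<in>{1..M-1}. ub a d * (\<Sum>e\<in>{1..M-1}. u d e * c e g))"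
          using uc g by (intro sum.cong) auto
        also have "\<dots> = (\<Sum>d\<in>{1..M-1}. \<Sum>e\<in>{1..M-1}. ub a d * u d e * c e g)"
          by (simp add: sum_distrib_left mult.assoc)
        also have "\<dots> = (\<Sum>e\<in>{1..M-1}. \<Sum>d\<in>{1..M-1}. ub a d * u d e * c e g)" by (rule sum.swap)
        also have "\<dots> = (\<Sum>e\<in>{1..M-1}. (\<Sum>d\<in>{1..M-1}. ub a d * u d e) * c e g)"
          by (simp add: sum_distrib_right)
        also have "\<dots> = (\<Sum>e\<in>{1..M-1}. if a = e then c e g else 0)"
          using hub a by (intro sum.cong) auto
        also have "\<dots> = c a g" using a by simp
        finally show ?thesis .
      qed
      have fe: "e j \<bullet> f a = (if a = j then 1 else 0)" if "a \<in> {1..M}" "j \<in> {1..M}" for a j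
        using f[OF that] by (simp add: inner_commute)
      have Tf: "T *v f q = (\<Sum>i\<in>{1..M}. D i q *\<^sub>R e i)" if q: "q \<in> {1..M}" for q
        unfolding Tmult
      proof (rule sum.cong[OF refl])
        fix i
        have "(\<Sum>j\<in>{1..M}. (D i j * (e j \<bullet> f q)) *\<^sub>R e i) = (\<Sum>j\<in>{1..M}. if q = j then D i q *\<^sub>R e i else 0)"
        proof (rule sum.cong[OF refl])
          fix j assume j: "j \<in> {1..M}"
          show "(D i j * (e j \<bullet> f q)) *\<^sub>R e i = (if q = j then D i q *\<^sub>R e i else 0)" using fe[OF q j] by simp
        qed
        also have "\<dots> = D i q *\<^sub>R e i" using q by simp
        finally show "(\<Sum>j\<in>{1..M}. (D i j * (e j \<bullet> f q)) *\<^sub>R e i) = D i q *\<^sub>R e i" .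
      qed
      have fTf: "f p \<bullet> (T *v f q) = D p q" if p: "p \<in> {1..M}" and q: "q \<in> {1..M}" for p q
      proof -
        have "f p \<bullet> (T *v f q) = (\<Sum>i\<in>{1..M}. D i q * (e i \<bullet> f p))"
          unfolding Tf[OF q] by (simp add: inner_sum_right inner_commute)
        also have "\<dots> = (\<Sum>i\<in>{1..M}. if p = i then D p q else 0)"
        proof (rule sum.cong[OF refl])
          fix i assume i: "i \<in> {1..M}"
          show "D i q * (e i \<bullet> f p) = (if p = i then D p q else 0)" using fe[OF p i] by simp
        qed
        also have "\<dots> = D p q" using p by simp
        finally show ?thesis .
      qed
      have fRf: "f p \<bullet> (T *v f q) = (\<Sum>i\<in>{1..M}. Dc i * (b i \<bullet> f q) * (f p \<bullet> b i))" for p q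
        unfolding TR Rmult by (simp add: inner_sum_right mult_ac)
      have bMf: "b M \<bullet> f p = D p M / \<omega>" if p: "p \<in> {1..M}" for p
      proof -
        have "b M \<bullet> f p = (1/\<omega>) * (\<Sum>i\<in>{1..M}. D i M * (e i \<bullet> f p))"
          unfolding bM' bM_def Tn_e by (simp add: inner_sum_left)
        also have "(\<Sum>i\<in>{1..M}. D i M * (e i \<bullet> f p)) = (\<Sum>i\<in>{1..M}. if p = i then D p M else 0)"
        proof (rule sum.cong[OF refl])
          fix i assume i: "i \<in> {1..M}"
          show "D i M * (e i \<bullet> f p) = (if p = i then D p M else 0)" using fe[OF p i] by simp
        qed
        also have "\<dots> = D p M" using p by simp
        finally show ?thesis by simp
      qed
      show "\<forall>\<alpha>\<in>{1..M-1}. \<forall>\<beta>\<in>{1..M-1}.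
               (\<Sum>\<gamma>\<in>{1..M-1}. ub \<alpha> \<gamma> * ub \<beta> \<gamma> * Dc \<gamma>)
               = D \<alpha> \<beta> - D \<alpha> M * D \<beta> M / D M M"
      proof (intro ballI)
        fix p q assume p: "p \<in> {1..M-1}" and q: "q \<in> {1..M-1}"
        have pI: "p \<in> {1..M}" and qI: "q \<in> {1..M}" using p q by auto
        have E1: "D p q = (\<Sum>g\<in>{1..M-1}. Dc g * (b g \<bullet> f q) * (f p \<bullet> b g)) + Dc M * (b M \<bullet> f q) * (f p \<bullet> b M)"
          using fTf[OF pI qI] fRf[of p q] split_last[OF M2, of "\<lambda>i. Dc i * (b i \<bullet> f q) * (f p \<bullet> b i)"] by simp
        have E2: "(\<Sum>g\<in>{1..M-1}. Dc g * (b g \<bullet> f q) * (f p \<bullet> b g)) = (\<Sum>g\<in>{1..M-1}. ub p g * ub q g * Dc g)"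
        proof (rule sum.cong[OF refl])
          fix g assume g: "g \<in> {1..M-1}"
          show "Dc g * (b g \<bullet> f q) * (f p \<bullet> b g) = ub p g * ub q g * Dc g"
            using ubc[OF p g] ubc[OF q g] by (simp add: c_def inner_commute)
        qed
        have E3: "Dc M * (b M \<bullet> f q) * (f p \<bullet> b M) = D p M * D q M / D M M"
        proof -
          have h1: "f p \<bullet> b M = D p M / \<omega>" using bMf[OF pI] by (simp add: inner_commute)
          show ?thesis unfolding h1 bMf[OF qI] DcM using om_pos DMM by (simp add: power2_eq_square field_simps)
        qed
        show "(\<Sum>\<gamma>\<in>{1..M-1}. ub p \<gamma> * ub q \<gamma> * Dc \<gamma>) = D p q - D p M * D q M / D M M"
          using E1 E2 E3 by simp
      qed
    qed
    show "D M M > 0 \<and> (\<forall>(u :: nat \<Rightarrow> nat \<Rightarrow> real) (ub :: nat \<Rightarrow> nat \<Rightarrow> real).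
          (\<forall>\<alpha>\<in>{1..M-1}. e \<alpha> = (\<Sum>\<beta>\<in>{1..M-1}. u \<beta> \<alpha> *\<^sub>R b \<beta>))
          \<and> (\<forall>\<alpha>\<in>{1..M-1}. \<forall>\<beta>\<in>{1..M-1}.
               (\<Sum>\<gamma>\<in>{1..M-1}. ub \<alpha> \<gamma> * u \<gamma> \<beta>) = (if \<alpha> = \<beta> then 1 else 0))
          \<longrightarrow>
          (\<forall>(r :: real^'n) (x :: nat \<Rightarrow> real) (\<zeta> :: nat \<Rightarrow> real).
             r = (\<Sum>\<gamma>\<in>{1..M-1}. x \<gamma> *\<^sub>R e \<gamma>) + x M *\<^sub>R nv
             \<and> r = (\<Sum>\<gamma>\<in>{1..M-1}. \<zeta> \<gamma> *\<^sub>R b \<gamma>) + \<zeta> M *\<^sub>R b M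
             \<longrightarrow>
             (\<forall>\<alpha>\<in>{1..M-1}. \<zeta> \<alpha> = (\<Sum>\<gamma>\<in>{1..M-1}. u \<alpha> \<gamma> * (x \<gamma> - D \<gamma> M / D M M * x M)))
             \<and> \<zeta> M = omega M e D nc / D M M * x M
             \<and> (\<forall>\<alpha>\<in>{1..M-1}. x \<alpha> = (\<Sum>\<gamma>\<in>{1..M-1}. ub \<alpha> \<gamma> * \<zeta> \<gamma>)
                                   + D \<alpha> M / omega M e D nc * \<zeta> M)
             \<and> x M = D M M / omega M e D nc * \<zeta> M)
          \<and> (\<forall>\<alpha>\<in>{1..M-1}. \<forall>\<beta>\<in>{1..M-1}.
               (\<Sum>\<gamma>\<in>{1..M-1}. ub \<alpha> \<gamma> * ub \<beta> \<gamma> * Dc \<gamma>)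
               = D \<alpha> \<beta> - D \<alpha> M * D \<beta> M / D M M))"
    proof (intro conjI allI impI)
      show "D M M > 0" by (rule DMM)
    next
      fix u ub :: "nat \<Rightarrow> nat \<Rightarrow> real" and r :: "real^'n" and x \<zeta> :: "nat \<Rightarrow> real"
      assume H: "(\<forall>\<alpha>\<in>{1..M-1}. e \<alpha> = (\<Sum>\<beta>\<in>{1..M-1}. u \<beta> \<alpha> *\<^sub>R b \<beta>))
          \<and> (\<forall>\<alpha>\<in>{1..M-1}. \<forall>\<beta>\<in>{1..M-1}.
               (\<Sum>\<gamma>\<in>{1..M-1}. ub \<alpha> \<gamma> * u \<gamma> \<beta>) = (if \<alpha> = \<beta> then 1 else 0))"
        and R: "r = (\<Sum>\<gamma>\<in>{1..M-1}. x \<gamma> *\<^sub>R e \<gamma>) + x M *\<^sub>R nv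
             \<and> r = (\<Sum>\<gamma>\<in>{1..M-1}. \<zeta> \<gamma> *\<^sub>R b \<gamma>) + \<zeta> M *\<^sub>R b M"
      note K = keyA[OF H[THEN conjunct1] H[THEN conjunct2] R[THEN conjunct1] R[THEN conjunct2]]
      show "\<forall>\<alpha>\<in>{1..M-1}. \<zeta> \<alpha> = (\<Sum>\<gamma>\<in>{1..M-1}. u \<alpha> \<gamma> * (x \<gamma> - D \<gamma> M / D M M * x M))" using K by blast
      show "\<zeta> M = omega M e D nc / D M M * x M" using K by blast
      show "\<forall>\<alpha>\<in>{1..M-1}. x \<alpha> = (\<Sum>\<gamma>\<in>{1..M-1}. ub \<alpha> \<gamma> * \<zeta> \<gamma>) + D \<alpha> M / omega M e D nc * \<zeta> M" using K by blast
      show "x M = D M M / omega M e D nc * \<zeta> M" using K by blast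
    next
      fix u ub :: "nat \<Rightarrow> nat \<Rightarrow> real"
      assume H: "(\<forall>\<alpha>\<in>{1..M-1}. e \<alpha> = (\<Sum>\<beta>\<in>{1..M-1}. u \<beta> \<alpha> *\<^sub>R b \<beta>))
          \<and> (\<forall>\<alpha>\<in>{1..M-1}. \<forall>\<beta>\<in>{1..M-1}.
               (\<Sum>\<gamma>\<in>{1..M-1}. ub \<alpha> \<gamma> * u \<gamma> \<beta>) = (if \<alpha> = \<beta> then 1 else 0))"
      show "\<forall>\<alpha>\<in>{1..M-1}. \<forall>\<beta>\<in>{1..M-1}.
               (\<Sum>\<gamma>\<in>{1..M-1}. ub \<alpha> \<gamma> * ub \<beta> \<gamma> * Dc \<gamma>)
               = D \<alpha> \<beta> - D \<alpha> M * D \<beta> M / D M M"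
        by (rule keyB[OF H[THEN conjunct1] H[THEN conjunct2]])
    qed
  qed
  show ?thesis
  proof (rule exI[of _ b], rule exI[of _ Dc], intro conjI)
    show "is_basis M b" by (rule b_basis)
    show "\<forall>\<alpha>\<in>{1..M-1}. \<forall>\<beta>\<in>{1..M-1}. b \<alpha> \<bullet> b \<beta> = (if \<alpha> = \<beta> then 1 else 0)"
      using borth by blast
    show "\<forall>\<alpha>\<in>{1..M-1}. b \<alpha> \<bullet> nv = 0" using bUps by blast
    show "span (b ` {1..M-1}) = {r. r \<bullet> nv = 0}" using bimgJ B(6) by (simp add: Ups_def)
    show "b M = (1 / omega M e D nc) *\<^sub>R
              (\<Sum>i\<in>{1..M}. \<Sum>j\<in>{1..M}. (Dmix M e D i j * nc j) *\<^sub>R e i)"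
      unfolding Dmix_eq omega_eq bM' bM_def \<omega>_def ..
    show "norm (b M) = 1" using bM' bM_norm by simp
    show "b M \<bullet> nv \<noteq> 0" using bM' bM_nv nTn_pos om_pos by simp
    show "\<forall>i\<in>{1..M}. Dc i > 0" by (rule Dc_pos)
    show "(\<Sum>i\<in>{1..M}. \<Sum>j\<in>{1..M}. D i j *\<^sub>R tprod (e i) (e j))
        = (\<Sum>i\<in>{1..M}. \<Sum>j\<in>{1..M}. (Dc i * (if i = j then 1 else 0)) *\<^sub>R tprod (b i) (b j))"
      using TR by (simp only: T_def R_def)
    show "Dc M = (omega M e D nc)\<^sup>2 / (\<Sum>i\<in>{1..M}. \<Sum>j\<in>{1..M}. Dlow M e D i j * nc i * nc j)"
      unfolding Dlow_eq omega_eq by (simp add: Dc_def \<omega>_def)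
    show "((e M = nv \<and> (\<forall>\<alpha>\<in>{1..M-1}. e \<alpha> \<bullet> nv = 0)) \<longrightarrow>
        D M M > 0 \<and>
        (\<forall>(u :: nat \<Rightarrow> nat \<Rightarrow> real) (ub :: nat \<Rightarrow> nat \<Rightarrow> real).
          (\<forall>\<alpha>\<in>{1..M-1}. e \<alpha> = (\<Sum>\<beta>\<in>{1..M-1}. u \<beta> \<alpha> *\<^sub>R b \<beta>))
          \<and> (\<forall>\<alpha>\<in>{1..M-1}. \<forall>\<beta>\<in>{1..M-1}.
               (\<Sum>\<gamma>\<in>{1..M-1}. ub \<alpha> \<gamma> * u \<gamma> \<beta>) = (if \<alpha> = \<beta> then 1 else 0))
          \<longrightarrow>
          (\<forall>(r :: real^'n) (x :: nat \<Rightarrow> real) (\<zeta> :: nat \<Rightarrow> real).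
             r = (\<Sum>\<gamma>\<in>{1..M-1}. x \<gamma> *\<^sub>R e \<gamma>) + x M *\<^sub>R nv
             \<and> r = (\<Sum>\<gamma>\<in>{1..M-1}. \<zeta> \<gamma> *\<^sub>R b \<gamma>) + \<zeta> M *\<^sub>R b M
             \<longrightarrow>
             (\<forall>\<alpha>\<in>{1..M-1}. \<zeta> \<alpha> = (\<Sum>\<gamma>\<in>{1..M-1}. u \<alpha> \<gamma> * (x \<gamma> - D \<gamma> M / D M M * x M)))
             \<and> \<zeta> M = omega M e D nc / D M M * x M
             \<and> (\<forall>\<alpha>\<in>{1..M-1}. x \<alpha> = (\<Sum>\<gamma>\<in>{1..M-1}. ub \<alpha> \<gamma> * \<zeta> \<gamma>)
                                   + D \<alpha> M / omega M e D nc * \<zeta> M)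
             \<and> x M = D M M / omega M e D nc * \<zeta> M)
          \<and> (\<forall>\<alpha>\<in>{1..M-1}. \<forall>\<beta>\<in>{1..M-1}.
               (\<Sum>\<gamma>\<in>{1..M-1}. ub \<alpha> \<gamma> * ub \<beta> \<gamma> * Dc \<gamma>)
               = D \<alpha> \<beta> - D \<alpha> M * D \<beta> M / D M M)))"
      by (rule part3)
  qed
qed


end
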